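(* Let $\mathcal{A}$ be a Banach algebra (real or complex) with nonzero identity $e$, and let $x\in\mathcal{A}$ be such that the partial sums $\sum_{j=0}^n x^j$, $n\ge0$, are uniformly bounded in norm. Then for $0\le r<1$ the series $\sum_{j=0}^\infty r^j x^j$ converges absolutely and equals $(e-rx)^{-1}$, these inverses are bounded in norm uniformly in $r\in[0,1)$, and $e-x$ is invertible in $\mathcal{A}$.
   Context: A Banach algebra is an associative algebra $\mathcal{A}$ over $\mathbb{R}$ or $\mathbb{C}$ with nonzero multiplicative identity $e$, complete with respect to a norm satisfying $\|ab\|\le\|a\|\,\|b\|$ and $\|e\|=1$. Powers are $x^0=e$, $x^{j+1}=x^jx$. *)

theory Defs
  imports "HOL-Analysis.Analysis"
begin

definition alg_invertible :: "'a::ring_1 \<Rightarrow> bool" where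
  "alg_invertible a \<longleftrightarrow> (\<exists>b. a * b = 1 \<and> b * a = 1)"

definition alg_inverse :: "'a::ring_1 \<Rightarrow> 'a" where
  "alg_inverse a = (THE b. a * b = 1 \<and> b * a = 1)"

end

theory Submission
  imports Defs
begin

lemma inv_unique:
  fixes a b :: "'a::ring_1"
  assumes "a * b = 1" "b * a = 1"
  shows "alg_inverse a = b" "alg_invertible a"
proof -
  have u: "\<And>c. a * c = 1 \<and> c * a = 1 \<Longrightarrow> c = b"
  proof -
    fix c assume h: "a * c = 1 \<and> c * a = 1"
    have "c = c * (a * b)" using assms by simp
    also have "\<dots> = (c * a) * b" by (simp add: mult.assoc)
    also have "\<dots> = b" using h by simp
    finally show "c = b" .
  qed
  show "alg_inverse a = b" unfolding alg_inverse_def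
  proof (rule the_equality)
    show "a * b = 1 \<and> b * a = 1" using assms by (rule conjI)
  qed (rule u)
  show "alg_invertible a" using assms unfolding alg_invertible_def by blast
qed

lemma geo_partial:
  fixes w :: "'a::ring_1"
  shows "(1 - w) * (\<Sum>j<n. w ^ j) = 1 - w ^ n \<and> (\<Sum>j<n. w ^ j) * (1 - w) = 1 - w ^ n"
proof (induction n)
  case 0 then show ?case by simp
next
  case (Suc n)
  have i1: "(1 - w) * (\<Sum>j<n. w ^ j) = 1 - w ^ n" and i2: "(\<Sum>j<n. w ^ j) * (1 - w) = 1 - w ^ n"
    using Suc by auto
  have e1: "(1 - w) * w ^ n = w ^ n - w ^ Suc n" by (simp add: left_diff_distrib)
  have e2: "w ^ n * (1 - w) = w ^ n - w ^ Suc n" by (simp add: right_diff_distrib power_Suc2 del: power_Suc)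
  have "(1 - w) * (\<Sum>j<Suc n. w ^ j) = (1 - w) * (\<Sum>j<n. w ^ j) + (1 - w) * w ^ n"
    by (simp add: distrib_left)
  also have "\<dots> = 1 - w ^ Suc n" unfolding i1 e1 by simp
  finally have a: "(1 - w) * (\<Sum>j<Suc n. w ^ j) = 1 - w ^ Suc n" .
  have "(\<Sum>j<Suc n. w ^ j) * (1 - w) = (\<Sum>j<n. w ^ j) * (1 - w) + w ^ n * (1 - w)"
    by (simp add: distrib_right)
  also have "\<dots> = 1 - w ^ Suc n" unfolding i2 e2 by simp
  finally show ?case using a by simp
qed

lemma geo:
  fixes w :: "'a::{real_normed_algebra_1, banach}"
  assumes s: "summable (\<lambda>j. norm (w ^ j))"
  shows "(1 - w) * (\<Sum>j. w ^ j) = 1 \<and> (\<Sum>j. w ^ j) * (1 - w) = 1"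
proof -
  have sw: "summable (\<lambda>j. w ^ j)" using summable_norm_cancel[OF s] .
  have z: "(\<lambda>n. w ^ n) \<longlonglongrightarrow> 0" using summable_LIMSEQ_zero[OF sw] .
  have p: "(\<lambda>n. \<Sum>j<n. w ^ j) \<longlonglongrightarrow> (\<Sum>j. w ^ j)"
    using sw summable_LIMSEQ by blast
  have l1: "(\<lambda>n. (1 - w) * (\<Sum>j<n. w ^ j)) \<longlonglongrightarrow> (1 - w) * (\<Sum>j. w ^ j)"
    by (intro tendsto_mult_left p)
  have l2: "(\<lambda>n. (\<Sum>j<n. w ^ j) * (1 - w)) \<longlonglongrightarrow> (\<Sum>j. w ^ j) * (1 - w)"
    by (intro tendsto_mult_right p)
  have l3: "(\<lambda>n. 1 - w ^ n) \<longlonglongrightarrow> 1"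
    using tendsto_diff[OF tendsto_const z, of 1] by simp
  show ?thesis
    using LIMSEQ_unique[OF l1[unfolded geo_partial[THEN conjunct1]] l3]
      LIMSEQ_unique[OF l2[unfolded geo_partial[THEN conjunct2]] l3] by simp
qed

lemma abel_partial:
  fixes x :: "'a::real_normed_algebra_1" and r :: real
  shows "(\<Sum>j\<le>N. (r ^ j) *\<^sub>R x ^ j) =
     (1 - r) *\<^sub>R (\<Sum>n<N. r ^ n *\<^sub>R (\<Sum>j\<le>n. x ^ j)) + r ^ N *\<^sub>R (\<Sum>j\<le>N. x ^ j)"
proof (induction N)
  case 0 then show ?case by simp
next
  case (Suc N)
  show ?case using Suc
    by (simp add: algebra_simps scaleR_add_right scaleR_diff_left)
qed

theorem mainTheorem6:
  fixes x :: "'a::{real_normed_algebra_1, banach}"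
  assumes bdd: "\<exists>B. \<forall>n. norm (\<Sum>j\<le>n. x ^ j) \<le> B"
  shows "(\<forall>r::real. 0 \<le> r \<and> r < 1 \<longrightarrow>
            summable (\<lambda>j. norm ((r ^ j) *\<^sub>R x ^ j)) \<and>
            alg_invertible (1 - r *\<^sub>R x) \<and>
            (\<Sum>j. (r ^ j) *\<^sub>R x ^ j) = alg_inverse (1 - r *\<^sub>R x))
       \<and> (\<exists>M. \<forall>r::real. 0 \<le> r \<and> r < 1 \<longrightarrow> norm (alg_inverse (1 - r *\<^sub>R x)) \<le> M)
       \<and> alg_invertible (1 - x)"
proof -
  obtain B where B: "\<And>n. norm (\<Sum>j\<le>n. x ^ j) \<le> B" using bdd by blast
  have B1: "1 \<le> B" using B[of 0] by simp
  have xb: "norm (x ^ j) \<le> 2 * B" for j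
  proof (cases j)
    case 0 then show ?thesis using B1 by simp
  next
    case (Suc n)
    have e: "x ^ j = (\<Sum>i\<le>Suc n. x ^ i) - (\<Sum>i\<le>n. x ^ i)" using Suc by simp
    have "norm (x ^ j) \<le> norm (\<Sum>i\<le>Suc n. x ^ i) + norm (\<Sum>i\<le>n. x ^ i)"
      unfolding e by (rule norm_triangle_ineq4)
    then show ?thesis using B[of n] B[of "Suc n"] by simp
  qed
  have part: "summable (\<lambda>j. norm ((r ^ j) *\<^sub>R x ^ j)) \<and>
      (1 - r *\<^sub>R x) * (\<Sum>j. (r ^ j) *\<^sub>R x ^ j) = 1 \<and>
      (\<Sum>j. (r ^ j) *\<^sub>R x ^ j) * (1 - r *\<^sub>R x) = 1 \<and>
      norm (\<Sum>j. (r ^ j) *\<^sub>R x ^ j) \<le> B" if r: "0 \<le> r" "r < 1" for r :: real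
  proof -
    have nb: "norm ((r ^ j) *\<^sub>R x ^ j) \<le> 2 * B * r ^ j" for j
      using xb[of j] r by (simp add: mult_left_mono mult.commute)
    have sg: "summable (\<lambda>j. 2 * B * r ^ j)"
      using r by (intro summable_mult summable_geometric) simp
    have s: "summable (\<lambda>j. norm ((r ^ j) *\<^sub>R x ^ j))"
      by (rule summable_comparison_test[OF _ sg]) (use nb in simp)
    have s': "summable (\<lambda>j. norm ((r *\<^sub>R x) ^ j))" using s by simp
    have g: "(1 - r *\<^sub>R x) * (\<Sum>j. (r *\<^sub>R x) ^ j) = 1 \<and> (\<Sum>j. (r *\<^sub>R x) ^ j) * (1 - r *\<^sub>R x) = 1"
      by (rule geo[OF s'])
    have pb: "norm (\<Sum>j\<le>N. (r ^ j) *\<^sub>R x ^ j) \<le> B" for N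
    proof -
      have "norm ((1 - r) *\<^sub>R (\<Sum>n<N. r ^ n *\<^sub>R (\<Sum>j\<le>n. x ^ j)))
          \<le> (1 - r) * (\<Sum>n<N. r ^ n * B)"
      proof -
        have "norm (\<Sum>n<N. r ^ n *\<^sub>R (\<Sum>j\<le>n. x ^ j)) \<le> (\<Sum>n<N. norm (r ^ n *\<^sub>R (\<Sum>j\<le>n. x ^ j)))"
          by (rule norm_sum)
        also have "\<dots> \<le> (\<Sum>n<N. r ^ n * B)"
          by (intro sum_mono) (use r B in \<open>simp add: mult_left_mono\<close>)
        finally show ?thesis using r by (simp add: mult_left_mono)
      qed
      moreover have "norm (r ^ N *\<^sub>R (\<Sum>j\<le>N. x ^ j)) \<le> r ^ N * B"
        using r B[of N] by (simp add: mult_left_mono)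
      moreover have "(1 - r) * (\<Sum>n<N. r ^ n * B) + r ^ N * B = B"
      proof -
        have "(1 - r) * (\<Sum>n<N. r ^ n * B) = (1 - r ^ N) * B"
          by (simp add: one_diff_power_eq sum_distrib_right[symmetric] mult.assoc)
        then show ?thesis by (simp add: algebra_simps)
      qed
      ultimately show ?thesis unfolding abel_partial
        using norm_triangle_ineq[of "(1 - r) *\<^sub>R (\<Sum>n<N. r ^ n *\<^sub>R (\<Sum>j\<le>n. x ^ j))"
            "r ^ N *\<^sub>R (\<Sum>j\<le>N. x ^ j)"] by linarith
    qed
    have "(\<lambda>N. \<Sum>j\<le>N. (r ^ j) *\<^sub>R x ^ j) \<longlonglongrightarrow> (\<Sum>j. (r ^ j) *\<^sub>R x ^ j)"
      using summable_LIMSEQ'[OF summable_norm_cancel[OF s]] .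
    then have "norm (\<Sum>j. (r ^ j) *\<^sub>R x ^ j) \<le> B"
      by (rule LIMSEQ_le_const2[OF tendsto_norm]) (use pb in blast)
    then show ?thesis using s g by simp
  qed
  have A: "\<forall>r::real. 0 \<le> r \<and> r < 1 \<longrightarrow>
            summable (\<lambda>j. norm ((r ^ j) *\<^sub>R x ^ j)) \<and>
            alg_invertible (1 - r *\<^sub>R x) \<and>
            (\<Sum>j. (r ^ j) *\<^sub>R x ^ j) = alg_inverse (1 - r *\<^sub>R x)"
  proof (intro allI impI)
    fix r :: real assume "0 \<le> r \<and> r < 1"
    then have p: "summable (\<lambda>j. norm ((r ^ j) *\<^sub>R x ^ j)) \<and>
      (1 - r *\<^sub>R x) * (\<Sum>j. (r ^ j) *\<^sub>R x ^ j) = 1 \<and>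
      (\<Sum>j. (r ^ j) *\<^sub>R x ^ j) * (1 - r *\<^sub>R x) = 1 \<and>
      norm (\<Sum>j. (r ^ j) *\<^sub>R x ^ j) \<le> B" using part by blast
    show "summable (\<lambda>j. norm ((r ^ j) *\<^sub>R x ^ j)) \<and>
            alg_invertible (1 - r *\<^sub>R x) \<and>
            (\<Sum>j. (r ^ j) *\<^sub>R x ^ j) = alg_inverse (1 - r *\<^sub>R x)"
      using p inv_unique[of "1 - r *\<^sub>R x" "\<Sum>j. (r ^ j) *\<^sub>R x ^ j"] by simp
  qed
  have M: "\<exists>M. \<forall>r::real. 0 \<le> r \<and> r < 1 \<longrightarrow> norm (alg_inverse (1 - r *\<^sub>R x)) \<le> M"
  proof (intro exI allI impI)
    fix r :: real assume r: "0 \<le> r \<and> r < 1"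
    then have p: "(1 - r *\<^sub>R x) * (\<Sum>j. (r ^ j) *\<^sub>R x ^ j) = 1 \<and>
      (\<Sum>j. (r ^ j) *\<^sub>R x ^ j) * (1 - r *\<^sub>R x) = 1 \<and>
      norm (\<Sum>j. (r ^ j) *\<^sub>R x ^ j) \<le> B" using part by blast
    then show "norm (alg_inverse (1 - r *\<^sub>R x)) \<le> B"
      using inv_unique[of "1 - r *\<^sub>R x" "\<Sum>j. (r ^ j) *\<^sub>R x ^ j"] by simp
  qed
  define r0 :: real where "r0 = 1 - 1 / (2 * (B * norm x + 1))"
  define c where "c = B * norm x + 1"
  have bx: "0 \<le> B * norm x" using B1 by simp
  have c1: "1 \<le> c" unfolding c_def using bx by simp
  have d0: "0 < 1 / (2 * c)" using c1 by simp
  have d1: "1 / (2 * c) \<le> 1" using c1 by simp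
  have r0c: "1 - r0 = 1 / (2 * c)" unfolding r0_def c_def by simp
  have r0: "0 \<le> r0" "r0 < 1" using r0c d0 d1 by linarith+
  define y where "y = (\<Sum>j. (r0 ^ j) *\<^sub>R x ^ j)"
  have y1: "(1 - r0 *\<^sub>R x) * y = 1" and y2: "y * (1 - r0 *\<^sub>R x) = 1" and yb: "norm y \<le> B"
    using part[OF r0] unfolding y_def by simp_all
  define v where "v = (1 - r0) *\<^sub>R (y * x)"
  have "norm v = (1 - r0) * norm (y * x)" unfolding v_def using r0 by simp
  also have "\<dots> \<le> (1 - r0) * (B * norm x)"
  proof (rule mult_left_mono)
    show "norm (y * x) \<le> B * norm x"
      using norm_mult_ineq[of y x] mult_right_mono[OF yb norm_ge_zero[of x]] by linarith
  qed (use r0 in simp)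
  also have "\<dots> = (B * norm x) / (2 * c)" unfolding r0c by simp
  also have "\<dots> < 1" using c1 by (simp add: c_def)
  finally have nv: "norm v < 1" .
  have sv: "summable (\<lambda>j. norm (v ^ j))"
    by (rule summable_comparison_test[OF _ summable_geometric[of "norm v"]])
       (use nv norm_power_ineq in auto)
  define z where "z = (\<Sum>j. v ^ j)"
  have z1: "(1 - v) * z = 1" and z2: "z * (1 - v) = 1" using geo[OF sv] unfolding z_def by simp_all
  have fac: "1 - x = (1 - r0 *\<^sub>R x) * (1 - v)"
  proof -
    have "(1 - r0 *\<^sub>R x) * v = (1 - r0) *\<^sub>R (((1 - r0 *\<^sub>R x) * y) * x)"
      unfolding v_def by (simp add: mult.assoc)
    also have "\<dots> = (1 - r0) *\<^sub>R x" using y1 by simp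
    finally have "(1 - r0 *\<^sub>R x) * v = (1 - r0) *\<^sub>R x" .
    then show ?thesis by (simp add: algebra_simps)
  qed
  have "(1 - x) * (z * y) = 1"
  proof -
    have "(1 - x) * (z * y) = (1 - r0 *\<^sub>R x) * (((1 - v) * z) * y)"
      unfolding fac by (simp add: mult.assoc)
    then show ?thesis using z1 y1 by simp
  qed
  moreover have "(z * y) * (1 - x) = 1"
  proof -
    have "(z * y) * (1 - x) = z * ((y * (1 - r0 *\<^sub>R x)) * (1 - v))"
      unfolding fac by (simp add: mult.assoc)
    then show ?thesis using z2 y2 by simp
  qed
  ultimately have I: "alg_invertible (1 - x)" unfolding alg_invertible_def by blast
  show ?thesis by (intro conjI A M I)
qed

end
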